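(* Let $\alpha,\beta\in\mathbb R$ and $\sigma_w^2>0$ with $\alpha\neq0$ and $\alpha^2\sigma_w^2+\beta^2>1$. Suppose there is an eigenvector $u$ of $\hat A$ with eigenvalue $1$ such that $X^\top u\neq\mathbf 0_{d_0}$. Then, for the linear-ResGCN covariances $\tilde\Sigma^{(L)}$ and metrics defined in the context, $\lim_{L\to\infty}\mathrm{FSP}_L(\sigma_w^2)=\infty$ and $\lim_{L\to\infty}\mathrm{GEV}_L(\sigma_w^2)=0$.
   Context: Let $\mathcal G=(\mathcal V,\mathcal E)$ be a finite undirected graph with $n$ nodes, adjacency matrix $A$, degree matrix $D=\mathrm{diag}(A\mathbf 1_n)$ with degrees $d_i$, $\tilde A=A+I$, $\tilde D=D+I$, $\hat A=\tilde D^{-1/2}\tilde A\tilde D^{-1/2}$, $\hat L=I-\hat A$. For $H\in\mathbb R^{n\times C}$ with rows $h_i$, $\mathrm{Dir}(H)=\mathrm{tr}(H^\top\hat LH)=\sum_{\{i,j\}\in\mathcal E}\|h_i/\sqrt{1+d_i}-h_j/\sqrt{1+d_j}\|^2$. Let $X\in\mathbb R^{n\times d_0}$ be nonzero and $C\ge1$ an integer. The infinite-width (NNGP) covariances of a linear residual GCN ($X^{(0)}=XW^{(0)}$, $H^{(l)}=\hat AX^{(l-1)}W^{(l)}$, $X^{(l)}=\alpha H^{(l)}+\beta X^{(l-1)}$, i.i.d. zero-mean weights of variance $\sigma_w^2/\text{fan-in}$) are defined by $\tilde\Sigma^{(1)}=\frac{\sigma_w^4}{d_0}\hat AXX^\top\hat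 A$ and $\tilde\Sigma^{(l+1)}=\alpha^2\sigma_w^2\hat A\tilde\Sigma^{(l)}\hat A+\beta^2\tilde\Sigma^{(l)}$. With $H\in\mathbb R^{n\times C}$ having i.i.d. columns $N(\mathbf 0_n,\tilde\Sigma^{(L)})$, define $\mathrm{FSP}_L(\sigma_w^2)=\mathbb E[\|H\|_F^2/\|X\|_F^2]$ and $\mathrm{GEV}_L(\sigma_w^2)=\mathbb E[\mathrm{Dir}(H)/\|H\|_F^2]$. *)

theory Defs
  imports "HOL-Analysis.Analysis" "HOL-Probability.Probability"
begin

text \<open>Nodes are indexed by a finite type 'n, input features by 'd (d0 = CARD('d)),
  output channels by 'c (C = CARD('c)). Matrices are real^'col^'row.\<close>

definition is_adjacency :: "real^'n^'n \<Rightarrow> bool" where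
  "is_adjacency A \<longleftrightarrow> (\<forall>i j. A$i$j = 0 \<or> A$i$j = 1) \<and> (\<forall>i j. A$i$j = A$j$i) \<and> (\<forall>i. A$i$i = 0)"

definition degree :: "real^'n^'n \<Rightarrow> 'n \<Rightarrow> real" where
  "degree A i = (\<Sum>j\<in>UNIV. A$i$j)"

definition A_hat :: "real^'n^'n \<Rightarrow> real^'n^'n" where
  "A_hat A = (\<chi> i j. (A$i$j + (if i = j then 1 else 0)) /
                        (sqrt (1 + degree A i) * sqrt (1 + degree A j)))"

definition L_hat :: "real^'n^'n \<Rightarrow> real^'n^'n" where
  "L_hat A = mat 1 - A_hat A"

definition frob_sq :: "real^'b^'a \<Rightarrow> real" where
  "frob_sq M = (\<Sum>i\<in>UNIV. \<Sum>j\<in>UNIV. (M$i$j)\<^sup>2)"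

definition trace_mat :: "real^'n^'n \<Rightarrow> real" where
  "trace_mat M = (\<Sum>i\<in>UNIV. M$i$i)"

definition dirichlet :: "real^'n^'n \<Rightarrow> real^'c^'n \<Rightarrow> real" where
  "dirichlet A H = trace_mat (transpose H ** L_hat A ** H)"

text \<open>NNGP covariances: sigma_cov A X s a b l is \<Sigma>~^(l+1) (shifted index), s = sigma_w^2.\<close>
fun sigma_cov :: "real^'n^'n \<Rightarrow> real^'d^'n \<Rightarrow> real \<Rightarrow> real \<Rightarrow> real \<Rightarrow> nat \<Rightarrow> real^'n^'n" where
  "sigma_cov A X s a b 0 = (s\<^sup>2 / real CARD('d)) *\<^sub>R (A_hat A ** X ** transpose X ** A_hat A)"
| "sigma_cov A X s a b (Suc l) =
     (a\<^sup>2 * s) *\<^sub>R (A_hat A ** sigma_cov A X s a b l ** A_hat A) + b\<^sup>2 *\<^sub>R sigma_cov A X s a b l"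

definition Sigma_L :: "real^'n^'n \<Rightarrow> real^'d^'n \<Rightarrow> real \<Rightarrow> real \<Rightarrow> real \<Rightarrow> nat \<Rightarrow> real^'n^'n" where
  "Sigma_L A X s a b L = sigma_cov A X s a b (L - 1)"

definition std_gauss_mat :: "(('n \<times> 'c) \<Rightarrow> real) measure" where
  "std_gauss_mat = PiM UNIV (\<lambda>_. density lborel (\<lambda>x. ennreal (std_normal_density x)))"

definition to_mat :: "(('n \<times> 'c) \<Rightarrow> real) \<Rightarrow> real^'c^'n" where
  "to_mat z = (\<chi> i j. z (i, j))"

text \<open>H has i.i.d. columns N(0, S): H = G Z with G G^T = S and Z standard Gaussian
  (any such factor G gives the same law). The expectation of f(H):\<close>
definition gauss_expect :: "real^'n^'n \<Rightarrow> (real^'c^'n \<Rightarrow> real) \<Rightarrow> real" where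
  "gauss_expect S f =
     (let G = (SOME G :: real^'n^'n. G ** transpose G = S)
      in integral\<^sup>L std_gauss_mat (\<lambda>z. f (G ** to_mat z)))"

definition FSP :: "real^'n^'n \<Rightarrow> real^'d^'n \<Rightarrow> real \<Rightarrow> real \<Rightarrow> real \<Rightarrow> 'c::finite itself \<Rightarrow> nat \<Rightarrow> real" where
  "FSP A X s a b _ L = gauss_expect (Sigma_L A X s a b L) (\<lambda>H::real^'c^'n. frob_sq H / frob_sq X)"

definition GEV :: "real^'n^'n \<Rightarrow> real^'d^'n \<Rightarrow> real \<Rightarrow> real \<Rightarrow> real \<Rightarrow> 'c::finite itself \<Rightarrow> nat \<Rightarrow> real" where
  "GEV A X s a b _ L = gauss_expect (Sigma_L A X s a b L) (\<lambda>H::real^'c^'n. dirichlet A H / frob_sq H)"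

end

theory Submission
  imports Defs
begin

definition dt :: "real^'n^'n \<Rightarrow> 'n \<Rightarrow> real" where
  "dt A i = 1 + degree A i"
definition At :: "real^'n^'n \<Rightarrow> 'n \<Rightarrow> 'n \<Rightarrow> real" where
  "At A i j = A$i$j + (if i = j then 1 else 0)"

lemma adj_nonneg: "is_adjacency A \<Longrightarrow> A$i$j \<ge> 0"
  unfolding is_adjacency_def by (metis order_refl zero_le_one)
lemma adj_sym: "is_adjacency A \<Longrightarrow> A$i$j = A$j$i"
  unfolding is_adjacency_def by metis
lemma adj_diag: "is_adjacency A \<Longrightarrow> A$i$i = 0"
  unfolding is_adjacency_def by metis

lemma dt_pos: "is_adjacency A \<Longrightarrow> dt A i > 0"
  unfolding dt_def degree_def using adj_nonneg[of A i]
  by (smt (verit) sum_nonneg)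

lemma dt_nz: "is_adjacency A \<Longrightarrow> dt A i \<noteq> 0"
  using dt_pos[of A i] by simp

lemma dt_sqrt_sq: "is_adjacency A \<Longrightarrow> (sqrt (dt A i))\<^sup>2 = dt A i"
  using dt_pos[of A i] by simp

lemma At_nonneg: "is_adjacency A \<Longrightarrow> At A i j \<ge> 0"
  unfolding At_def using adj_nonneg[of A i j] by simp
lemma At_sym: "is_adjacency A \<Longrightarrow> At A i j = At A j i"
  unfolding At_def using adj_sym[of A i j] by auto
lemma At_diag: "is_adjacency A \<Longrightarrow> At A i i = 1"
  unfolding At_def using adj_diag[of A i] by auto

lemma At_rowsum: "(\<Sum>j\<in>UNIV. At A i j) = dt A i"
  unfolding At_def dt_def degree_def by (simp add: sum.distrib)
lemma At_colsum: "is_adjacency A \<Longrightarrow> (\<Sum>i\<in>UNIV. At A i j) = dt A j"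
  using At_rowsum[of A j] At_sym[of A] by simp

lemma Ahat_entry: "A_hat A $ i $ j = At A i j / (sqrt (dt A i) * sqrt (dt A j))"
  unfolding A_hat_def At_def dt_def by simp

lemma Ahat_sym: "is_adjacency A \<Longrightarrow> transpose (A_hat A) = A_hat A"
  unfolding transpose_def by (simp add: vec_eq_iff Ahat_entry At_sym mult.commute)

lemma sym_inner:
  fixes M :: "real^'n^'n"
  assumes "transpose M = M"
  shows "x \<bullet> (M *v y) = (M *v x) \<bullet> y"
proof -
  have e: "M$i$j = M$j$i" for i j
  proof -
    have "transpose M $ j $ i = M $ j $ i" using assms by simp
    then show ?thesis by (simp add: transpose_def)
  qed
  have "x \<bullet> (M *v y) = (\<Sum>i\<in>UNIV. \<Sum>j\<in>UNIV. x$i * M$i$j * y$j)"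
    by (simp add: inner_vec_def matrix_vector_mult_def sum_distrib_left mult.assoc)
  also have "\<dots> = (\<Sum>j\<in>UNIV. \<Sum>i\<in>UNIV. x$i * M$i$j * y$j)" by (rule sum.swap)
  also have "\<dots> = (\<Sum>j\<in>UNIV. \<Sum>i\<in>UNIV. (M$j$i * x$i) * y$j)"
    by (simp add: e mult.commute mult.left_commute)
  also have "\<dots> = (M *v x) \<bullet> y"
    by (simp add: inner_vec_def matrix_vector_mult_def sum_distrib_right)
  finally show ?thesis .
qed

lemma quad_Ahat:
  fixes x :: "real^'n"
  assumes adj: "is_adjacency A"
  defines "y \<equiv> \<lambda>i. x$i / sqrt (dt A i)"
  shows "x \<bullet> (A_hat A *v x) = (\<Sum>i\<in>UNIV. \<Sum>j\<in>UNIV. At A i j * y i * y j)"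
proof -
  have "x \<bullet> (A_hat A *v x) = (\<Sum>i\<in>UNIV. \<Sum>j\<in>UNIV. x$i * A_hat A$i$j * x$j)"
    by (simp add: inner_vec_def matrix_vector_mult_def sum_distrib_left mult.assoc)
  also have "\<dots> = (\<Sum>i\<in>UNIV. \<Sum>j\<in>UNIV. At A i j * y i * y j)"
    by (intro sum.cong refl) (simp add: Ahat_entry y_def field_simps)
  finally show ?thesis .
qed

lemma quad_id1:
  fixes x :: "real^'n"
  assumes adj: "is_adjacency A"
  defines "y \<equiv> \<lambda>i. x$i / sqrt (dt A i)"
  shows "x \<bullet> x = (\<Sum>i\<in>UNIV. \<Sum>j\<in>UNIV. At A i j * (y i)\<^sup>2)"
proof -
  have "(\<Sum>i\<in>UNIV. \<Sum>j\<in>UNIV. At A i j * (y i)\<^sup>2) = (\<Sum>i\<in>UNIV. (y i)\<^sup>2 * dt A i)"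
    by (simp add: sum_distrib_right[symmetric] At_rowsum mult.commute)
  also have "\<dots> = (\<Sum>i\<in>UNIV. (x$i)\<^sup>2)"
    by (intro sum.cong refl) (simp add: y_def power_divide dt_sqrt_sq[OF adj] dt_nz[OF adj])
  finally show ?thesis by (simp add: inner_vec_def power2_eq_square)
qed

lemma quad_id2:
  fixes x :: "real^'n"
  assumes adj: "is_adjacency A"
  defines "y \<equiv> \<lambda>i. x$i / sqrt (dt A i)"
  shows "x \<bullet> x = (\<Sum>i\<in>UNIV. \<Sum>j\<in>UNIV. At A i j * (y j)\<^sup>2)"
proof -
  have "(\<Sum>i\<in>UNIV. \<Sum>j\<in>UNIV. At A i j * (y j)\<^sup>2) = (\<Sum>j\<in>UNIV. \<Sum>i\<in>UNIV. At A i j * (y j)\<^sup>2)"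
    by (rule sum.swap)
  also have "\<dots> = (\<Sum>j\<in>UNIV. (y j)\<^sup>2 * dt A j)"
    by (simp add: sum_distrib_right[symmetric] At_colsum[OF adj] mult.commute)
  also have "\<dots> = (\<Sum>i\<in>UNIV. (x$i)\<^sup>2)"
    by (intro sum.cong refl) (simp add: y_def power_divide dt_sqrt_sq[OF adj] dt_nz[OF adj])
  finally show ?thesis by (simp add: inner_vec_def power2_eq_square)
qed

lemma quad_plus:
  fixes x :: "real^'n"
  assumes adj: "is_adjacency A"
  defines "y \<equiv> \<lambda>i. x$i / sqrt (dt A i)"
  shows "x \<bullet> x + x \<bullet> (A_hat A *v x) = (\<Sum>i\<in>UNIV. \<Sum>j\<in>UNIV. At A i j * (y i + y j)\<^sup>2) / 2"
proof -
  have "(\<Sum>i\<in>UNIV. \<Sum>j\<in>UNIV. At A i j * (y i + y j)\<^sup>2) =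
    (\<Sum>i\<in>UNIV. \<Sum>j\<in>UNIV. At A i j * (y i)\<^sup>2) + 2 * (\<Sum>i\<in>UNIV. \<Sum>j\<in>UNIV. At A i j * y i * y j)
     + (\<Sum>i\<in>UNIV. \<Sum>j\<in>UNIV. At A i j * (y j)\<^sup>2)"
    by (simp add: sum.distrib sum_distrib_left power2_eq_square algebra_simps)
  then show ?thesis
    using quad_Ahat[OF adj, of x] quad_id1[OF adj, of x] quad_id2[OF adj, of x]
    unfolding y_def by simp
qed

lemma quad_minus:
  fixes x :: "real^'n"
  assumes adj: "is_adjacency A"
  defines "y \<equiv> \<lambda>i. x$i / sqrt (dt A i)"
  shows "x \<bullet> x - x \<bullet> (A_hat A *v x) = (\<Sum>i\<in>UNIV. \<Sum>j\<in>UNIV. At A i j * (y i - y j)\<^sup>2) / 2"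
proof -
  have "(\<Sum>i\<in>UNIV. \<Sum>j\<in>UNIV. At A i j * (y i - y j)\<^sup>2) =
    (\<Sum>i\<in>UNIV. \<Sum>j\<in>UNIV. At A i j * (y i)\<^sup>2) - 2 * (\<Sum>i\<in>UNIV. \<Sum>j\<in>UNIV. At A i j * y i * y j)
     + (\<Sum>i\<in>UNIV. \<Sum>j\<in>UNIV. At A i j * (y j)\<^sup>2)"
    by (simp add: sum.distrib sum_subtractf sum_distrib_left power2_eq_square algebra_simps)
  then show ?thesis
    using quad_Ahat[OF adj, of x] quad_id1[OF adj, of x] quad_id2[OF adj, of x]
    unfolding y_def by simp
qed

lemma quad_upper: "is_adjacency A \<Longrightarrow> x \<bullet> (A_hat A *v x) \<le> x \<bullet> x"
  using quad_minus[of A x] At_nonneg[of A]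
  by (smt (verit) divide_nonneg_nonneg mult_nonneg_nonneg sum_nonneg zero_le_power2)

lemma quad_lower_strict:
  assumes adj: "is_adjacency A" and x: "x \<noteq> 0"
  shows "x \<bullet> x + x \<bullet> (A_hat A *v x) > 0"
proof -
  define y where "y = (\<lambda>i. x$i / sqrt (dt A i))"
  obtain i where xi: "x$i \<noteq> 0" using x by (metis vec_eq_iff zero_index)
  have yi: "y i \<noteq> 0" using xi dt_pos[OF adj, of i] unfolding y_def by simp
  have nn: "\<And>i j. At A i j * (y i + y j)\<^sup>2 \<ge> 0" using At_nonneg[OF adj] by simp
  have "(\<Sum>j\<in>UNIV. At A i j * (y i + y j)\<^sup>2) \<ge> At A i i * (y i + y i)\<^sup>2"
    by (rule member_le_sum) (use nn in auto)
  moreover have "At A i i * (y i + y i)\<^sup>2 > 0" using yi At_diag[OF adj] by simp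
  moreover have "(\<Sum>i'\<in>UNIV. \<Sum>j\<in>UNIV. At A i' j * (y i' + y j)\<^sup>2) \<ge> (\<Sum>j\<in>UNIV. At A i j * (y i + y j)\<^sup>2)"
    by (rule member_le_sum) (use nn in \<open>auto intro: sum_nonneg\<close>)
  ultimately show ?thesis using quad_plus[OF adj, of x] unfolding y_def by linarith
qed

lemma quad_abs: "is_adjacency A \<Longrightarrow> \<bar>x \<bullet> (A_hat A *v x)\<bar> \<le> x \<bullet> x"
  using quad_upper[of A x] quad_lower_strict[of A x] by (cases "x = 0") auto

lemma sym_norm_bound:
  fixes M :: "real^'n^'n"
  assumes sym: "transpose M = M" and q: "\<And>x. \<bar>x \<bullet> (M *v x)\<bar> \<le> x \<bullet> x"
  shows "norm (M *v x) \<le> norm x"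
proof -
  define y where "y = M *v x"
  have 1: "(x + y) \<bullet> (M *v (x + y)) - (x - y) \<bullet> (M *v (x - y)) = 4 * (x \<bullet> (M *v y))"
    using sym_inner[OF sym, of y x]
    by (simp add: matrix_vector_right_distrib matrix_vector_mult_diff_distrib inner_add_left inner_add_right
        inner_diff_left inner_diff_right inner_commute)
  have 2: "x \<bullet> (M *v y) = y \<bullet> y" using sym_inner[OF sym, of x y] by (simp add: y_def)
  have 3: "(x + y) \<bullet> (M *v (x + y)) \<le> (x + y) \<bullet> (x + y)" using q[of "x+y"] by linarith
  have 4: "- ((x - y) \<bullet> (M *v (x - y))) \<le> (x - y) \<bullet> (x - y)" using q[of "x-y"] by linarith
  have "4 * (y \<bullet> y) \<le> (x + y) \<bullet> (x + y) + (x - y) \<bullet> (x - y)" using 1 2 3 4 by linarith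
  also have "\<dots> = 2 * (x \<bullet> x) + 2 * (y \<bullet> y)"
    by (simp add: inner_add_left inner_add_right inner_diff_left inner_diff_right inner_commute)
  finally have "y \<bullet> y \<le> x \<bullet> x" by simp
  then show ?thesis unfolding y_def by (simp add: norm_eq_sqrt_inner)
qed

lemma Ahat_norm: "is_adjacency A \<Longrightarrow> norm (A_hat A *v x) \<le> norm x"
  by (rule sym_norm_bound[OF Ahat_sym quad_abs])

lemma orthonormal_coeff:
  fixes B :: "'a::euclidean_space set"
  assumes fin: "finite B" and orth: "pairwise orthogonal B" and nrm: "\<And>x. x \<in> B \<Longrightarrow> norm x = 1"
    and b: "b \<in> B"
  shows "b \<bullet> (\<Sum>v\<in>B. c v *\<^sub>R v) = c b"
proof -
  have "b \<bullet> (\<Sum>v\<in>B. c v *\<^sub>R v) = (\<Sum>v\<in>B. c v * (b \<bullet> v))"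
    by (simp add: inner_sum_right)
  also have "\<dots> = (\<Sum>v\<in>B. if v = b then c v else 0)"
  proof (intro sum.cong refl)
    fix v assume v: "v \<in> B"
    show "c v * (b \<bullet> v) = (if v = b then c v else 0)"
    proof (cases "v = b")
      case True
      then have "b \<bullet> v = 1" using nrm[OF b] by (simp add: norm_eq_1)
      then show ?thesis using True by simp
    next
      case False
      then have "b \<bullet> v = 0" using orth v b unfolding pairwise_def orthogonal_def by metis
      then show ?thesis using False by simp
    qed
  qed
  also have "\<dots> = c b" using fin b by (simp add: sum.delta')
  finally show ?thesis .
qed

lemma orthonormal_expand:
  fixes B :: "'a::euclidean_space set"
  assumes fin: "finite B" and orth: "pairwise orthogonal B" and nrm: "\<And>x. x \<in> B \<Longrightarrow> norm x = 1"
    and x: "x \<in> span B"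
  shows "x = (\<Sum>b\<in>B. (b \<bullet> x) *\<^sub>R b)"
proof -
  obtain c where c: "x = (\<Sum>v\<in>B. c v *\<^sub>R v)" using x span_finite[OF fin] by auto
  have "\<And>b. b \<in> B \<Longrightarrow> b \<bullet> x = c b" using orthonormal_coeff[OF fin orth nrm] c by simp
  then show ?thesis using c by (metis (no_types, lifting) sum.cong)
qed

lemma orthonormal_inner:
  fixes B :: "'a::euclidean_space set"
  assumes fin: "finite B" and orth: "pairwise orthogonal B" and nrm: "\<And>x. x \<in> B \<Longrightarrow> norm x = 1"
    and x: "x \<in> span B"
  shows "x \<bullet> y = (\<Sum>b\<in>B. (b \<bullet> x) * (b \<bullet> y))"
proof -
  have "x \<bullet> y = (\<Sum>b\<in>B. (b \<bullet> x) *\<^sub>R b) \<bullet> y" using orthonormal_expand[OF assms] by simp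
  also have "\<dots> = (\<Sum>b\<in>B. (b \<bullet> x) * (b \<bullet> y))" by (simp add: inner_sum_left)
  finally show ?thesis .
qed

lemma gram_entry: "(M ** transpose M) $ i $ j = (M $ i) \<bullet> (M $ j)"
  by (simp add: matrix_matrix_mult_def transpose_def inner_vec_def)

lemma gram_factor:
  fixes F :: "real^'m^'n"
  shows "\<exists>G::real^'n^'n. G ** transpose G = F ** transpose F"
proof -
  define r where "r = (\<lambda>i. F $ i)"
  define W where "W = span (range r)"
  have "subspace W" unfolding W_def by simp
  then obtain B where BW: "B \<subseteq> W" and orth: "pairwise orthogonal B"
    and nrm: "\<And>x. x \<in> B \<Longrightarrow> norm x = 1" and ind: "independent B"
    and cB: "card B = dim W" and sB: "span B = W"
    by (metis orthonormal_basis_subspace)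
  have fin: "finite B" using ind by (rule independent_imp_finite)
  have "dim W \<le> card (range r)" unfolding W_def by (rule dim_le_card) auto
  also have "\<dots> \<le> CARD('n)" by (rule card_image_le) simp
  finally have "card B \<le> card (UNIV :: 'n set)" using cB by simp
  then obtain e :: "real^'m \<Rightarrow> 'n" where inj: "inj_on e B"
    using card_le_inj[OF fin Finite_Set.finite_UNIV] by auto
  define s where "s = (\<lambda>i. \<Sum>b\<in>B. (b \<bullet> r i) *\<^sub>R (axis (e b) (1::real)))"
  have ss: "s i \<bullet> s j = (\<Sum>b\<in>B. (b \<bullet> r i) * (b \<bullet> r j))" for i j
  proof -
    have "s i \<bullet> s j = (\<Sum>b\<in>B. \<Sum>b'\<in>B. (b \<bullet> r i) * (b' \<bullet> r j) * (if e b = e b' then 1 else 0))"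
      unfolding s_def inner_sum_left inner_sum_right by (intro sum.cong refl) (use inj in \<open>auto simp: inner_axis_axis inj_on_eq_iff\<close>)
    also have "\<dots> = (\<Sum>b\<in>B. \<Sum>b'\<in>B. if b = b' then (b \<bullet> r i) * (b' \<bullet> r j) else 0)"
      by (intro sum.cong refl) (use inj in \<open>auto simp: inj_on_eq_iff\<close>)
    also have "\<dots> = (\<Sum>b\<in>B. (b \<bullet> r i) * (b \<bullet> r j))" using fin by (simp add: sum.delta)
    finally show ?thesis .
  qed
  have rr: "r i \<bullet> r j = (\<Sum>b\<in>B. (b \<bullet> r i) * (b \<bullet> r j))" for i j
  proof -
    have "r i \<in> span B" unfolding sB W_def by (rule span_base) simp
    then show ?thesis using orthonormal_inner[OF fin orth] nrm by blast
  qed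
  define G :: "real^'n^'n" where "G = (\<chi> i. s i)"
  have "G ** transpose G = F ** transpose F"
  proof -
    have "(G ** transpose G) $ i $ j = (F ** transpose F) $ i $ j" for i j
    proof -
      have "(G ** transpose G) $ i $ j = s i \<bullet> s j" unfolding gram_entry G_def vec_lambda_beta by (rule refl)
      also have "\<dots> = r i \<bullet> r j" by (simp only: ss rr)
      also have "\<dots> = (F ** transpose F) $ i $ j" unfolding gram_entry r_def by (rule refl)
      finally show ?thesis .
    qed
    then show ?thesis by (simp add: vec_eq_iff)
  qed
  then show ?thesis by blast
qed

lemma L_hat_sym: "is_adjacency A \<Longrightarrow> transpose (L_hat A) = L_hat A"
proof -
  assume adj: "is_adjacency A"
  have "(A_hat A) $ j $ i = (A_hat A) $ i $ j" for i j
    using Ahat_sym[OF adj] by (metis transpose_def vec_lambda_beta)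
  then show ?thesis unfolding L_hat_def transpose_def by (simp add: vec_eq_iff mat_def)
qed

lemma L_hat_apply: "L_hat A *v x = x - A_hat A *v x"
  unfolding L_hat_def by (simp add: matrix_vector_mult_diff_rdistrib)

lemma L_quad_bounds:
  assumes "is_adjacency A"
  shows "0 \<le> x \<bullet> (L_hat A *v x) \<and> x \<bullet> (L_hat A *v x) \<le> 2 * (x \<bullet> x)"
  using quad_abs[OF assms, of x] by (simp add: L_hat_apply inner_diff_right abs_le_iff)

definition eigsp :: "real^'n^'n \<Rightarrow> (real^'n) set" where
  "eigsp A = {x. A_hat A *v x = x}"

definition perpsp :: "real^'n^'n \<Rightarrow> (real^'n) set" where
  "perpsp A = {x. \<forall>e\<in>eigsp A. x \<bullet> e = 0}"

lemma subspace_eigsp: "subspace (eigsp A)"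
  unfolding subspace_def eigsp_def
  by (simp add: matrix_vector_right_distrib matrix_vector_mult_scaleR)

lemma subspace_perpsp: "subspace (perpsp A)"
  unfolding subspace_def perpsp_def by (simp add: inner_add_left)

lemma perpsp_invariant:
  assumes adj: "is_adjacency A" and x: "x \<in> perpsp A"
  shows "A_hat A *v x \<in> perpsp A"
  unfolding perpsp_def
proof (intro CollectI ballI)
  fix e assume e: "e \<in> eigsp A"
  have "(A_hat A *v x) \<bullet> e = x \<bullet> (A_hat A *v e)" using sym_inner[OF Ahat_sym[OF adj], of x e] by simp
  also have "\<dots> = x \<bullet> e" using e unfolding eigsp_def by simp
  also have "\<dots> = 0" using x e unfolding perpsp_def by simp
  finally show "(A_hat A *v x) \<bullet> e = 0" .
qed

lemma closed_perpsp: "closed (perpsp A)"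
proof -
  have "perpsp A = (\<Inter>e\<in>eigsp A. {x. e \<bullet> x = 0})" unfolding perpsp_def by (auto simp: inner_commute)
  then show ?thesis by (auto intro: closed_hyperplane)
qed

lemma theta_exists:
  fixes A :: "real^'n^'n"
  assumes adj: "is_adjacency A"
  shows "\<exists>\<theta>. 0 \<le> \<theta> \<and> \<theta> < 1 \<and> (\<forall>x\<in>perpsp A. norm (A_hat A *v x) \<le> \<theta> * norm x)"
proof -
  define S where "S = sphere (0::real^'n) 1 \<inter> perpsp A"
  have cS: "compact S" unfolding S_def by (intro compact_Int_closed compact_sphere closed_perpsp)
  have scale: "norm (A_hat A *v x) \<le> \<theta> * norm x"
    if x: "x \<in> perpsp A" and bnd: "\<forall>y\<in>S. norm (A_hat A *v y) \<le> \<theta>" for x \<theta>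
  proof (cases "x = 0")
    case True then show ?thesis by simp
  next
    case False
    define y where "y = (1 / norm x) *\<^sub>R x"
    have "y \<in> perpsp A" unfolding y_def using x subspace_perpsp[of A] by (simp add: subspace_scale)
    moreover have "norm y = 1" unfolding y_def using False by simp
    ultimately have "y \<in> S" unfolding S_def by simp
    then have "norm (A_hat A *v y) \<le> \<theta>" using bnd by blast
    moreover have "A_hat A *v y = (1 / norm x) *\<^sub>R (A_hat A *v x)" unfolding y_def
      by (simp add: matrix_vector_mult_scaleR)
    ultimately have "norm (A_hat A *v x) / norm x \<le> \<theta>" by simp
    then show ?thesis using False by (simp add: divide_le_eq mult.commute)
  qed
  show ?thesis
  proof (cases "S = {}")
    case True
    then have "\<forall>x\<in>perpsp A. norm (A_hat A *v x) \<le> 0 * norm x" using scale by blast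
    then show ?thesis by (intro exI[of _ 0]) auto
  next
    case False
    have cont: "continuous_on S (\<lambda>x. norm (A_hat A *v x))"
      by (intro continuous_on_norm linear_continuous_on matrix_vector_mul_bounded_linear)
    obtain x0 where x0S: "x0 \<in> S" and mx: "\<forall>y\<in>S. norm (A_hat A *v y) \<le> norm (A_hat A *v x0)"
      using continuous_attains_sup[OF cS False cont] by blast
    define \<theta> where "\<theta> = norm (A_hat A *v x0)"
    have x0p: "x0 \<in> perpsp A" and nx0: "norm x0 = 1" using x0S unfolding S_def by auto
    have le1: "\<theta> \<le> 1" unfolding \<theta>_def using Ahat_norm[OF adj, of x0] nx0 by simp
    have lt1: "\<theta> < 1"
    proof (rule ccontr)
      assume "\<not> \<theta> < 1"
      then have t1: "\<theta> = 1" using le1 by simp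
      define z where "z = A_hat A *v (A_hat A *v x0)"
      have nz: "norm z \<le> 1" unfolding z_def using Ahat_norm[OF adj, of "A_hat A *v x0"] t1 \<theta>_def by simp
      have zz: "z \<bullet> z \<le> 1" using nz by (simp add: dot_square_norm power_le_one)
      have xz: "x0 \<bullet> z = 1"
        using sym_inner[OF Ahat_sym[OF adj], of x0 "A_hat A *v x0"] t1 unfolding z_def \<theta>_def
        by (simp add: dot_square_norm)
      have xx: "x0 \<bullet> x0 = 1" using nx0 by (simp add: dot_square_norm)
      have "(x0 - z) \<bullet> (x0 - z) = x0 \<bullet> x0 - 2 * (x0 \<bullet> z) + z \<bullet> z"
        by (simp add: inner_diff_left inner_diff_right inner_commute)
      then have "(x0 - z) \<bullet> (x0 - z) \<le> 0" using xz xx zz by simp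
      then have "(x0 - z) \<bullet> (x0 - z) = 0" using inner_ge_zero[of "x0 - z"] by linarith
      then have zx: "z = x0" by simp
      define y where "y = A_hat A *v x0 + x0"
      have "A_hat A *v y = y" unfolding y_def using zx unfolding z_def
        by (simp add: matrix_vector_right_distrib)
      then have yE: "y \<in> eigsp A" unfolding eigsp_def by simp
      have yP: "y \<in> perpsp A" unfolding y_def
        using perpsp_invariant[OF adj x0p] x0p subspace_perpsp[of A] by (simp add: subspace_add)
      have "y \<bullet> y = 0" using yE yP unfolding perpsp_def by blast
      then have "y = 0" by simp
      then have "A_hat A *v x0 = - x0" unfolding y_def by (metis add_eq_0_iff2)
      then have "x0 \<bullet> x0 + x0 \<bullet> (A_hat A *v x0) = 0" by simp
      moreover have "x0 \<noteq> 0" using nx0 by auto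
      ultimately show False using quad_lower_strict[OF adj] by force
    qed
    have "\<forall>x\<in>perpsp A. norm (A_hat A *v x) \<le> \<theta> * norm x"
      using scale mx unfolding \<theta>_def by blast
    moreover have "0 \<le> \<theta>" unfolding \<theta>_def by simp
    ultimately show ?thesis using lt1 by blast
  qed
qed

lemma proj_exists:
  fixes A :: "real^'n^'n"
  assumes adj: "is_adjacency A"
  shows "\<exists>K::real^'n^'n. transpose K = K \<and> (\<forall>x. K *v x \<in> perpsp A)
     \<and> (\<forall>x. A_hat A *v (K *v x) = K *v (A_hat A *v x))
     \<and> (\<forall>x. x \<bullet> (L_hat A *v x) = (K *v x) \<bullet> (L_hat A *v (K *v x)))"
proof -
  obtain B where BE: "B \<subseteq> eigsp A" and orth: "pairwise orthogonal B"
    and nrm: "\<And>x. x \<in> B \<Longrightarrow> norm x = 1" and ind: "independent B"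
    and sB: "span B = eigsp A"
    using orthonormal_basis_subspace[OF subspace_eigsp[of A]] by metis
  have fin: "finite B" using ind by (rule independent_imp_finite)
  define P :: "real^'n^'n" where "P = (\<chi> i j. \<Sum>b\<in>B. b$i * b$j)"
  define K where "K = mat 1 - P"
  have Pv: "P *v x = (\<Sum>b\<in>B. (b \<bullet> x) *\<^sub>R b)" for x
  proof -
    have "(P *v x) $ i = (\<Sum>b\<in>B. (b \<bullet> x) *\<^sub>R b) $ i" for i
    proof -
      have "(P *v x) $ i = (\<Sum>j\<in>UNIV. \<Sum>b\<in>B. b$i * b$j * x$j)"
        by (simp add: P_def matrix_vector_mult_def sum_distrib_right)
      also have "\<dots> = (\<Sum>b\<in>B. \<Sum>j\<in>UNIV. b$i * b$j * x$j)" by (rule sum.swap)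
      also have "\<dots> = (\<Sum>b\<in>B. (b \<bullet> x) * b$i)"
        by (simp add: inner_vec_def sum_distrib_left sum_distrib_right mult.commute mult.left_commute)
      also have "\<dots> = (\<Sum>b\<in>B. (b \<bullet> x) *\<^sub>R b) $ i" by (simp add: sum_component)
      finally show ?thesis .
    qed
    then show ?thesis by (simp add: vec_eq_iff)
  qed
  have Kv: "K *v x = x - P *v x" for x
    unfolding K_def by (simp add: matrix_vector_mult_diff_rdistrib)
  have PE: "P *v x \<in> eigsp A" for x
  proof -
    have "(\<Sum>b\<in>B. (b \<bullet> x) *\<^sub>R b) \<in> span B"
      by (intro span_sum span_scale span_base) auto
    then show ?thesis using Pv sB by simp
  qed
  have Efix: "A_hat A *v y = y" if "y \<in> eigsp A" for y using that unfolding eigsp_def by simp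
  have Kperp: "K *v x \<in> perpsp A" for x
    unfolding perpsp_def
  proof (intro CollectI ballI)
    fix e assume e: "e \<in> eigsp A"
    have eB: "e \<in> span B" using e sB by simp
    have "(P *v x) \<bullet> e = (\<Sum>b\<in>B. (b \<bullet> x) * (b \<bullet> e))" by (simp add: Pv inner_sum_left)
    also have "\<dots> = e \<bullet> x" using orthonormal_inner[OF fin orth nrm eB, of x] by (simp add: mult.commute)
    finally show "(K *v x) \<bullet> e = 0" by (simp add: Kv inner_diff_left inner_commute[of x e])
  qed
  have comm: "A_hat A *v (K *v x) = K *v (A_hat A *v x)" for x
  proof -
    have "P *v (A_hat A *v x) = P *v x"
    proof -
      have "b \<bullet> (A_hat A *v x) = b \<bullet> x" if "b \<in> B" for b
        using sym_inner[OF Ahat_sym[OF adj], of b x] Efix[of b] that BE by auto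
      then show ?thesis by (simp add: Pv)
    qed
    then show ?thesis using Efix[OF PE[of x]] by (simp add: Kv matrix_vector_mult_diff_distrib)
  qed
  have Lq: "x \<bullet> (L_hat A *v x) = (K *v x) \<bullet> (L_hat A *v (K *v x))" for x
  proof -
    have LP: "L_hat A *v (P *v x) = 0" using Efix[OF PE[of x]] by (simp add: L_hat_apply)
    have xs: "x = P *v x + K *v x" by (simp add: Kv)
    have "L_hat A *v x = L_hat A *v (K *v x)"
      by (subst xs) (simp add: matrix_vector_right_distrib LP)
    then have "x \<bullet> (L_hat A *v x) = (P *v x) \<bullet> (L_hat A *v (K *v x)) + (K *v x) \<bullet> (L_hat A *v (K *v x))"
      by (subst (1) xs) (simp add: inner_add_left)
    moreover have "(P *v x) \<bullet> (L_hat A *v (K *v x)) = 0"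
      using sym_inner[OF L_hat_sym[OF adj], of "P *v x" "K *v x"] LP by simp
    ultimately show ?thesis by simp
  qed
  have Ksym: "transpose K = K"
    unfolding K_def P_def transpose_def by (simp add: vec_eq_iff mat_def mult.commute)
  show ?thesis using Ksym Kperp comm Lq by blast
qed

lemma inner_mat: "(x::real^'n) \<bullet> ((M::real^'m^'n) *v y) = (transpose M *v x) \<bullet> y"
proof -
  have "x \<bullet> (M *v y) = (\<Sum>i\<in>UNIV. \<Sum>j\<in>UNIV. x$i * M$i$j * y$j)"
    by (simp add: inner_vec_def matrix_vector_mult_def sum_distrib_left mult.assoc)
  also have "\<dots> = (\<Sum>j\<in>UNIV. \<Sum>i\<in>UNIV. x$i * M$i$j * y$j)" by (rule sum.swap)
  also have "\<dots> = (\<Sum>j\<in>UNIV. (\<Sum>i\<in>UNIV. transpose M $ j $ i * x$i) * y$j)"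
    unfolding transpose_def vec_lambda_beta sum_distrib_right by (simp only: mult.commute)
  also have "\<dots> = (transpose M *v x) \<bullet> y"
    by (simp add: inner_vec_def matrix_vector_mult_def inner_real_def)
  finally show ?thesis .
qed

lemma frob_rows: "frob_sq M = (\<Sum>i\<in>UNIV. (M$i) \<bullet> (M$i))"
  unfolding frob_sq_def by (simp add: inner_vec_def power2_eq_square)

lemma frob_cols: "frob_sq M = (\<Sum>j\<in>UNIV. column j M \<bullet> column j M)"
proof -
  have "frob_sq M = (\<Sum>j\<in>UNIV. \<Sum>i\<in>UNIV. (M$i$j)\<^sup>2)" unfolding frob_sq_def by (rule sum.swap)
  then show ?thesis by (simp add: inner_vec_def power2_eq_square column_def)
qed

lemma frob_nonneg: "frob_sq M \<ge> 0"
  unfolding frob_sq_def by (simp add: sum_nonneg)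

lemma column_mult: "column j (M ** N) = M *v column j N"
  by (simp add: vec_eq_iff column_def matrix_matrix_mult_def matrix_vector_mult_def)

lemma gram_sum:
  fixes G1 G2 :: "real^'m^'n"
  shows "\<exists>G::real^'n^'n. G ** transpose G = G1 ** transpose G1 + G2 ** transpose G2"
proof -
  define F :: "real^('m+'m)^'n" where "F = (\<chi> i k. case k of Inl j \<Rightarrow> G1$i$j | Inr j \<Rightarrow> G2$i$j)"
  have "F ** transpose F = G1 ** transpose G1 + G2 ** transpose G2"
  proof -
    have "(F ** transpose F) $ i $ j = (G1 ** transpose G1 + G2 ** transpose G2) $ i $ j" for i j
    proof -
      have "(F ** transpose F) $ i $ j = (\<Sum>k\<in>UNIV <+> UNIV. F$i$k * F$j$k)"
        by (simp add: gram_entry inner_vec_def)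
      also have "\<dots> = (\<Sum>k\<in>UNIV. G1$i$k * G1$j$k) + (\<Sum>k\<in>UNIV. G2$i$k * G2$j$k)"
        by (subst sum.Plus) (auto simp: F_def)
      also have "\<dots> = (G1 ** transpose G1 + G2 ** transpose G2) $ i $ j"
        by (simp add: gram_entry inner_vec_def)
      finally show ?thesis .
    qed
    then show ?thesis by (simp add: vec_eq_iff)
  qed
  then obtain G :: "real^'n^'n" where "G ** transpose G = F ** transpose F" using gram_factor by blast
  then show ?thesis using \<open>F ** transpose F = _\<close> by auto
qed

lemma sigma_cov_Suc_eq: "sigma_cov A X s a b (Suc l) =
   (a\<^sup>2 * s) *\<^sub>R (A_hat A ** sigma_cov A X s a b l ** A_hat A) + b\<^sup>2 *\<^sub>R sigma_cov A X s a b l"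
  by simp

lemma gram_scale: fixes M :: "real^'m^'n" shows "(c *\<^sub>R M) ** transpose (c *\<^sub>R M) = (c * c) *\<^sub>R (M ** transpose M)"
  by (simp add: vec_eq_iff matrix_matrix_mult_def transpose_def sum_distrib_left mult_ac vector_scaleR_component)

lemma gram_conj:
  fixes S :: "real^'n^'n" and G :: "real^'m^'n"
  assumes "transpose S = S"
  shows "(S ** G) ** transpose (S ** G) = S ** (G ** transpose G) ** S"
proof -
  have "transpose (S ** G) = transpose G ** S" using assms by (simp add: matrix_transpose_mul)
  then show ?thesis by (simp only: matrix_mul_assoc)
qed

lemma factor_exists:
  fixes A :: "real^'n^'n" and X :: "real^'d^'n"
  assumes adj: "is_adjacency A" and s: "s \<ge> 0"
  shows "\<exists>G::real^'n^'n. G ** transpose G = sigma_cov A X s a b l"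
proof (induction l)
  case 0
  define c where "c = s\<^sup>2 / real CARD('d)"
  have c: "c \<ge> 0" unfolding c_def by simp
  define F where "F = sqrt c *\<^sub>R (A_hat A ** X)"
  have "F ** transpose F = c *\<^sub>R (A_hat A ** (X ** transpose X) ** A_hat A)"
    unfolding F_def gram_scale using c
    by (simp add: matrix_transpose_mul matrix_mul_assoc Ahat_sym[OF adj])
  also have "\<dots> = sigma_cov A X s a b 0" by (simp add: c_def matrix_mul_assoc)
  finally have "F ** transpose F = sigma_cov A X s a b 0" .
  moreover obtain G :: "real^'n^'n" where "G ** transpose G = F ** transpose F"
    using gram_factor[of F] by blast
  ultimately show ?case by auto
next
  case (Suc l)
  then obtain G :: "real^'n^'n" where G: "G ** transpose G = sigma_cov A X s a b l" by blast
  define G1 where "G1 = sqrt (a\<^sup>2 * s) *\<^sub>R (A_hat A ** G)"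
  define G2 where "G2 = \<bar>b\<bar> *\<^sub>R G"
  have e1: "G1 ** transpose G1 = (a\<^sup>2 * s) *\<^sub>R (A_hat A ** (G ** transpose G) ** A_hat A)"
  proof -
    have "sqrt (a\<^sup>2 * s) * sqrt (a\<^sup>2 * s) = a\<^sup>2 * s" using s by simp
    then show ?thesis unfolding G1_def gram_scale gram_conj[OF Ahat_sym[OF adj]] by simp
  qed
  have e2: "G2 ** transpose G2 = b\<^sup>2 *\<^sub>R (G ** transpose G)"
    unfolding G2_def gram_scale by (simp add: power2_eq_square)
  have "G1 ** transpose G1 + G2 ** transpose G2 = sigma_cov A X s a b (Suc l)"
    unfolding e1 e2 G sigma_cov_Suc_eq ..
  moreover obtain G' :: "real^'n^'n" where "G' ** transpose G' = G1 ** transpose G1 + G2 ** transpose G2"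
    using gram_sum[of G1 G2] by blast
  ultimately show ?case by auto
qed

lemma sym_fix:
  assumes "is_adjacency A" "A_hat A *v v = v" shows "v \<bullet> (A_hat A *v w) = v \<bullet> w"
proof -
  have "v \<bullet> (A_hat A *v w) = (A_hat A *v v) \<bullet> w" by (rule sym_inner[OF Ahat_sym[OF assms(1)]])
  then show ?thesis using assms(2) by simp
qed

lemma m_rec:
  assumes adj: "is_adjacency A" and v: "A_hat A *v v = v"
  shows "v \<bullet> (sigma_cov A X s a b (Suc l) *v v) = (a\<^sup>2 * s + b\<^sup>2) * (v \<bullet> (sigma_cov A X s a b l *v v))"
proof -
  let ?S = "sigma_cov A X s a b l"
  have "sigma_cov A X s a b (Suc l) *v v = (a\<^sup>2 * s) *\<^sub>R (A_hat A *v (?S *v (A_hat A *v v))) + b\<^sup>2 *\<^sub>R (?S *v v)"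
    by (simp add: matrix_vector_mult_add_rdistrib scaleR_matrix_vector_assoc[symmetric] matrix_vector_mul_assoc matrix_mul_assoc)
  then show ?thesis using v sym_fix[OF adj v] by (simp add: inner_add_right algebra_simps)
qed

lemma m_base:
  fixes X :: "real^'d^'n"
  assumes adj: "is_adjacency A" and v: "A_hat A *v v = v"
  shows "v \<bullet> (sigma_cov A X s a b 0 *v v) = (s\<^sup>2 / real CARD('d)) * ((transpose X *v v) \<bullet> (transpose X *v v))"
proof -
  have "sigma_cov A X s a b 0 *v v = (s\<^sup>2 / real CARD('d)) *\<^sub>R (A_hat A *v (X *v (transpose X *v (A_hat A *v v))))"
    by (simp add: scaleR_matrix_vector_assoc[symmetric] matrix_vector_mul_assoc matrix_mul_assoc)
  then show ?thesis using v sym_fix[OF adj v] inner_mat[of v X] by simp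
qed

lemma m_closed:
  fixes X :: "real^'d^'n"
  assumes adj: "is_adjacency A" and v: "A_hat A *v v = v"
  shows "v \<bullet> (sigma_cov A X s a b l *v v) = (a\<^sup>2 * s + b\<^sup>2) ^ l * (v \<bullet> (sigma_cov A X s a b 0 *v v))"
proof (induction l)
  case (Suc l)
  show ?case by (subst m_rec[OF adj v]) (simp add: Suc.IH)
qed simp

lemma frob_ge_quad:
  fixes G :: "real^'k^'n"
  assumes "norm v = 1"
  shows "v \<bullet> ((G ** transpose G) *v v) \<le> frob_sq G"
proof -
  have "v \<bullet> ((G ** transpose G) *v v) = (transpose G *v v) \<bullet> (transpose G *v v)"
    by (simp add: matrix_vector_mul_assoc[symmetric] inner_mat[of v G])
  also have "\<dots> = (\<Sum>j\<in>UNIV. (column j G \<bullet> v)\<^sup>2)"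
    by (simp add: inner_vec_def power2_eq_square column_def vector_matrix_mult_def mult.commute)
  also have "\<dots> \<le> (\<Sum>j\<in>UNIV. column j G \<bullet> column j G)"
  proof (rule sum_mono)
    fix j
    have "\<bar>column j G \<bullet> v\<bar> \<le> norm (column j G)" using Cauchy_Schwarz_ineq2[of "column j G" v] assms by simp
    then have "(column j G \<bullet> v)\<^sup>2 \<le> (norm (column j G))\<^sup>2" by (metis abs_le_square_iff abs_norm_cancel)
    then show "(column j G \<bullet> v)\<^sup>2 \<le> column j G \<bullet> column j G" by (simp add: dot_square_norm)
  qed
  also have "\<dots> = frob_sq G" by (simp add: frob_cols)
  finally show ?thesis .
qed

lemma dir_cols: "dirichlet A H = (\<Sum>k\<in>UNIV. column k H \<bullet> (L_hat A *v column k H))"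
proof -
  have "dirichlet A H = (\<Sum>k\<in>UNIV. \<Sum>i\<in>UNIV. (\<Sum>j\<in>UNIV. H$j$k * L_hat A$j$i) * H$i$k)"
    unfolding dirichlet_def trace_mat_def by (simp add: matrix_matrix_mult_def transpose_def)
  also have "\<dots> = (\<Sum>k\<in>UNIV. \<Sum>i\<in>UNIV. \<Sum>j\<in>UNIV. H$j$k * L_hat A$j$i * H$i$k)"
    by (simp add: sum_distrib_right)
  also have "\<dots> = (\<Sum>k\<in>UNIV. \<Sum>j\<in>UNIV. \<Sum>i\<in>UNIV. H$j$k * L_hat A$j$i * H$i$k)"
    by (intro sum.cong refl sum.swap)
  also have "\<dots> = (\<Sum>k\<in>UNIV. column k H \<bullet> (L_hat A *v column k H))"
    by (simp add: inner_vec_def matrix_vector_mult_def column_def sum_distrib_left mult.assoc)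
  finally show ?thesis .
qed

lemma dir_bounds:
  assumes adj: "is_adjacency A"
  shows "0 \<le> dirichlet A H \<and> dirichlet A H \<le> 2 * frob_sq H"
proof -
  have "0 \<le> (\<Sum>k\<in>UNIV. column k H \<bullet> (L_hat A *v column k H))"
    using L_quad_bounds[OF adj] by (intro sum_nonneg) blast
  moreover have "(\<Sum>k\<in>UNIV. column k H \<bullet> (L_hat A *v column k H)) \<le> (\<Sum>k\<in>UNIV. 2 * (column k H \<bullet> column k H))"
    using L_quad_bounds[OF adj] by (intro sum_mono) blast
  ultimately show ?thesis by (simp add: dir_cols frob_cols sum_distrib_left)
qed

lemma dir_K:
  assumes adj: "is_adjacency A"
    and KL: "\<forall>x. x \<bullet> (L_hat A *v x) = (K *v x) \<bullet> (L_hat A *v (K *v x))"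
  shows "dirichlet A H \<le> 2 * frob_sq (K ** H)"
proof -
  have "(\<Sum>k\<in>UNIV. column k H \<bullet> (L_hat A *v column k H)) \<le> (\<Sum>k\<in>UNIV. 2 * (column k (K ** H) \<bullet> column k (K ** H)))"
  proof (intro sum_mono)
    fix k
    show "column k H \<bullet> (L_hat A *v column k H) \<le> 2 * (column k (K ** H) \<bullet> column k (K ** H))"
      using KL L_quad_bounds[OF adj, of "K *v column k H"] by (simp add: column_mult)
  qed
  then show ?thesis by (simp add: dir_cols frob_cols sum_distrib_left)
qed

definition qK :: "real^'n^'n \<Rightarrow> real^'n^'n \<Rightarrow> real" where
  "qK K S = trace_mat (K ** S ** transpose K)"

lemma qK_expl: "qK K S = (\<Sum>i\<in>UNIV. \<Sum>k\<in>UNIV. \<Sum>j\<in>UNIV. K$i$j * S$j$k * K$i$k)"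
  unfolding qK_def trace_mat_def
  by (simp add: matrix_matrix_mult_def transpose_def sum_distrib_right)

lemma qK_lin: "qK K (c *\<^sub>R S + d *\<^sub>R S') = c * qK K S + d * qK K S'"
  unfolding qK_expl by (simp add: algebra_simps sum.distrib sum_distrib_left)

lemma qK_gram: "qK K (G ** transpose G) = frob_sq (K ** G)"
proof -
  have "K ** (G ** transpose G) ** transpose K = (K ** G) ** transpose (K ** G)"
    by (simp add: matrix_transpose_mul matrix_mul_assoc)
  then have "qK K (G ** transpose G) = (\<Sum>i\<in>UNIV. ((K ** G) ** transpose (K ** G)) $ i $ i)"
    unfolding qK_def trace_mat_def by simp
  also have "\<dots> = frob_sq (K ** G)" by (simp add: gram_entry frob_rows)
  finally show ?thesis .
qed

lemma frob_contract:
  fixes Y :: "real^'n^'n"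
  assumes cols: "\<And>j. column j Y \<in> perpsp A"
    and th: "\<forall>x\<in>perpsp A. norm (A_hat A *v x) \<le> \<theta> * norm x" and t0: "0 \<le> \<theta>"
  shows "frob_sq (A_hat A ** Y) \<le> \<theta>\<^sup>2 * frob_sq Y"
proof -
  have "frob_sq (A_hat A ** Y) = (\<Sum>j\<in>UNIV. (norm (A_hat A *v column j Y))\<^sup>2)"
    by (simp add: frob_cols column_mult dot_square_norm)
  also have "\<dots> \<le> (\<Sum>j\<in>UNIV. (\<theta> * norm (column j Y))\<^sup>2)"
    using th cols by (intro sum_mono power_mono) auto
  also have "\<dots> = \<theta>\<^sup>2 * frob_sq Y"
    by (simp add: frob_cols dot_square_norm sum_distrib_left power_mult_distrib)
  finally show ?thesis .
qed

lemma q_step: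
  fixes A :: "real^'n^'n" and K G :: "real^'n^'n"
  assumes adj: "is_adjacency A"
    and Kperp: "\<forall>x. K *v x \<in> perpsp A"
    and comm: "\<forall>x. A_hat A *v (K *v x) = K *v (A_hat A *v x)"
    and th: "\<forall>x\<in>perpsp A. norm (A_hat A *v x) \<le> \<theta> * norm x" and t0: "0 \<le> \<theta>"
    and c0: "c \<ge> 0"
  shows "qK K (c *\<^sub>R (A_hat A ** (G ** transpose G) ** A_hat A) + d\<^sup>2 *\<^sub>R (G ** transpose G))
     \<le> (c * \<theta>\<^sup>2 + d\<^sup>2) * qK K (G ** transpose G)"
proof -
  have KA: "K ** A_hat A = A_hat A ** K"
    using comm by (simp add: matrix_eq matrix_vector_mul_assoc[symmetric])
  have "qK K (A_hat A ** (G ** transpose G) ** A_hat A) = frob_sq (K ** (A_hat A ** G))"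
    by (simp add: gram_conj[OF Ahat_sym[OF adj], symmetric] qK_gram)
  also have "\<dots> = frob_sq (A_hat A ** (K ** G))" by (simp add: matrix_mul_assoc KA)
  also have "\<dots> \<le> \<theta>\<^sup>2 * frob_sq (K ** G)"
    by (rule frob_contract[OF _ th t0]) (simp add: column_mult Kperp)
  finally have 1: "qK K (A_hat A ** (G ** transpose G) ** A_hat A) \<le> \<theta>\<^sup>2 * qK K (G ** transpose G)"
    by (simp add: qK_gram)
  show ?thesis unfolding qK_lin using mult_left_mono[OF 1 c0] by (simp add: algebra_simps)
qed

lemma q_seq:
  fixes A :: "real^'n^'n" and K :: "real^'n^'n" and X :: "real^'d^'n"
  assumes adj: "is_adjacency A"
    and Kperp: "\<forall>x. K *v x \<in> perpsp A"
    and comm: "\<forall>x. A_hat A *v (K *v x) = K *v (A_hat A *v x)"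
    and th: "\<forall>x\<in>perpsp A. norm (A_hat A *v x) \<le> \<theta> * norm x" and t0: "0 \<le> \<theta>"
    and s: "s \<ge> 0"
  shows "qK K (sigma_cov A X s a b l) \<le> (a\<^sup>2 * s * \<theta>\<^sup>2 + b\<^sup>2) ^ l * qK K (sigma_cov A X s a b 0)"
proof (induction l)
  case 0 then show ?case by simp
next
  case (Suc l)
  obtain G :: "real^'n^'n" where G: "G ** transpose G = sigma_cov A X s a b l"
    using factor_exists[OF adj s] by blast
  have "qK K (sigma_cov A X s a b (Suc l)) \<le> (a\<^sup>2 * s * \<theta>\<^sup>2 + b\<^sup>2) * qK K (sigma_cov A X s a b l)"
    using q_step[OF adj Kperp comm th t0, of "a\<^sup>2 * s" G b] s
    by (simp add: G sigma_cov_Suc_eq)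
  also have "\<dots> \<le> (a\<^sup>2 * s * \<theta>\<^sup>2 + b\<^sup>2) * ((a\<^sup>2 * s * \<theta>\<^sup>2 + b\<^sup>2) ^ l * qK K (sigma_cov A X s a b 0))"
    using Suc.IH s by (intro mult_left_mono) auto
  finally show ?case by simp
qed

lemma qK_nonneg:
  fixes A :: "real^'n^'n" and X :: "real^'d^'n"
  assumes adj: "is_adjacency A" and s: "s \<ge> 0"
  shows "qK K (sigma_cov A X s a b l) \<ge> 0"
  using factor_exists[OF adj s, of X a b l] qK_gram frob_nonneg by metis

abbreviation NN :: "real measure" where
  "NN \<equiv> density lborel (\<lambda>x. ennreal (std_normal_density x))"

lemma NN_prob: "prob_space NN"
  proof qed (simp add: emeasure_density nn_integral_eq_integral normal_density_nonneg)

lemma sets_NN: "sets NN = sets borel" by simp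

lemma product_NN: "product_prob_space (\<lambda>_::'i. NN)"
  unfolding product_prob_space_def product_prob_space_axioms_def product_sigma_finite_def
  using NN_prob prob_space_imp_sigma_finite by blast

lemma gauss_prob: "prob_space (std_gauss_mat :: (('n::finite \<times> 'c::finite) \<Rightarrow> real) measure)"
  unfolding std_gauss_mat_def by (intro prob_space_PiM NN_prob)

lemma coord_meas_NN: "(\<lambda>z. z q) \<in> measurable (std_gauss_mat :: (('n::finite \<times> 'c::finite) \<Rightarrow> real) measure) NN"
  unfolding std_gauss_mat_def by (rule measurable_component_singleton) simp

lemma coord_meas[measurable]: "(\<lambda>z. z q) \<in> borel_measurable (std_gauss_mat :: (('n::finite \<times> 'c::finite) \<Rightarrow> real) measure)"
  using coord_meas_NN measurable_cong_sets[OF refl sets_NN] by blast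

lemma coord_distr: "distr (std_gauss_mat :: (('n::finite \<times> 'c::finite) \<Rightarrow> real) measure) NN (\<lambda>z. z q) = NN"
proof -
  interpret P: product_prob_space "\<lambda>_. NN" "UNIV :: ('n \<times> 'c) set" by (rule product_NN)
  show ?thesis unfolding std_gauss_mat_def by (rule P.PiM_component) simp
qed

lemma coord_distributed:
  "distributed (std_gauss_mat :: (('n::finite \<times> 'c::finite) \<Rightarrow> real) measure) lborel (\<lambda>z. z q)
     (\<lambda>x. ennreal (std_normal_density x))"
proof -
  have "distr (std_gauss_mat :: (('n \<times> 'c) \<Rightarrow> real) measure) lborel (\<lambda>z. z q) =
        distr (std_gauss_mat :: (('n \<times> 'c) \<Rightarrow> real) measure) NN (\<lambda>z. z q)"
    by (rule distr_cong) auto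
  moreover have "distr (std_gauss_mat :: (('n \<times> 'c) \<Rightarrow> real) measure) NN (\<lambda>z. z q) = NN"
    by (rule coord_distr)
  moreover have "(\<lambda>z. z q) \<in> borel_measurable (std_gauss_mat :: (('n \<times> 'c) \<Rightarrow> real) measure)"
    by (rule coord_meas)
  ultimately show ?thesis unfolding distributed_def by simp
qed

lemma col_indep:
  fixes g :: "real^'n::finite" and k :: "'c::finite"
  shows "prob_space.indep_vars (std_gauss_mat :: (('n \<times> 'c) \<Rightarrow> real) measure) (\<lambda>_. borel)
          (\<lambda>p z. g$p * z (p, k)) UNIV"
proof -
  let ?M = "std_gauss_mat :: (('n \<times> 'c) \<Rightarrow> real) measure"
  interpret M: prob_space ?M by (rule gauss_prob)
  have rv: "(\<lambda>z. z (p, k)) \<in> measurable ?M NN" for p :: 'n by (rule coord_meas_NN)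
  have "distr ?M (\<Pi>\<^sub>M p\<in>(UNIV::'n set). NN) (\<lambda>x. \<lambda>p\<in>UNIV. x (p, k)) = (\<Pi>\<^sub>M p\<in>(UNIV::'n set). NN)"
    unfolding std_gauss_mat_def
    using product_prob_space.distr_reorder[OF product_NN, of "\<lambda>p::'n. (p, k)" UNIV UNIV]
    by (simp add: inj_on_def)
  also have "\<dots> = (\<Pi>\<^sub>M p\<in>(UNIV::'n set). distr ?M NN (\<lambda>z. z (p, k)))"
    by (simp add: coord_distr)
  finally have "M.indep_vars (\<lambda>_. NN) (\<lambda>p z. z (p, k)) (UNIV :: 'n set)"
    by (subst M.indep_vars_iff_distr_eq_PiM[OF _ rv]) auto
  then show ?thesis
    by (rule M.indep_vars_compose2) (simp add: measurable_cong_sets[OF sets_NN refl])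
qed

lemma lin_distributed:
  fixes g :: "real^'n::finite" and k :: "'c::finite"
  assumes g: "g \<noteq> 0"
  shows "distributed (std_gauss_mat :: (('n \<times> 'c) \<Rightarrow> real) measure) lborel
           (\<lambda>z. \<Sum>p\<in>UNIV. g$p * z (p, k)) (\<lambda>x. ennreal (normal_density 0 (norm g) x))"
proof -
  let ?M = "std_gauss_mat :: (('n \<times> 'c) \<Rightarrow> real) measure"
  interpret M: prob_space ?M by (rule gauss_prob)
  define I where "I = {p. g$p \<noteq> 0}"
  have fin: "finite I" by simp
  have ne: "I \<noteq> {}" using g unfolding I_def by (auto simp: vec_eq_iff)
  have ind: "M.indep_vars (\<lambda>_. borel) (\<lambda>p z. g$p * z (p, k)) I"
    using M.indep_vars_subset[OF col_indep[of g k]] by simp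
  have pos: "\<And>p. p \<in> I \<Longrightarrow> 0 < \<bar>g$p\<bar>" unfolding I_def by simp
  have nd: "distributed ?M lborel (\<lambda>z. g$p * z (p, k)) (\<lambda>x. ennreal (normal_density 0 \<bar>g$p\<bar> x))"
    if "p \<in> I" for p
    using M.normal_density_affine[OF coord_distributed[of "(p, k)"], of "g$p" 0] that
    unfolding I_def by simp
  have D: "distributed ?M lborel (\<lambda>z. \<Sum>p\<in>I. g$p * z (p, k))
      (\<lambda>x. ennreal (normal_density (\<Sum>p\<in>I. 0) (sqrt (\<Sum>p\<in>I. \<bar>g$p\<bar>\<^sup>2)) x))"
    by (rule M.sum_indep_normal[OF fin ne ind pos nd])
  have e1: "(\<lambda>z. \<Sum>p\<in>I. g$p * z (p, k)) = (\<lambda>z. \<Sum>p\<in>UNIV. g$p * z (p, k))"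
    by (rule ext, rule sum.mono_neutral_left) (auto simp: I_def)
  have "(\<Sum>p\<in>I. \<bar>g$p\<bar>\<^sup>2) = (\<Sum>p\<in>I. (g$p)\<^sup>2)" by simp
  also have "\<dots> = (\<Sum>p\<in>UNIV. (g$p)\<^sup>2)"
    by (rule sum.mono_neutral_left) (auto simp: I_def)
  finally have "(\<Sum>p\<in>I. \<bar>g$p\<bar>\<^sup>2) = (\<Sum>p\<in>UNIV. (g$p)\<^sup>2)" .
  then have e2: "sqrt (\<Sum>p\<in>I. \<bar>g$p\<bar>\<^sup>2) = norm g"
    by (simp add: norm_vec_def L2_set_def)
  show ?thesis using D unfolding e1 e2 by simp
qed

lemma lin_sq:
  fixes g :: "real^'n::finite" and k :: "'c::finite"
  shows "integrable (std_gauss_mat :: (('n \<times> 'c) \<Rightarrow> real) measure) (\<lambda>z. (\<Sum>p\<in>UNIV. g$p * z (p, k))\<^sup>2)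
    \<and> (\<integral>z. (\<Sum>p\<in>UNIV. g$p * z (p, k))\<^sup>2 \<partial>(std_gauss_mat :: (('n \<times> 'c) \<Rightarrow> real) measure)) = g \<bullet> g"
proof (cases "g = 0")
  case True
  then show ?thesis by simp
next
  case False
  let ?M = "std_gauss_mat :: (('n \<times> 'c) \<Rightarrow> real) measure"
  let ?X = "\<lambda>z. \<Sum>p\<in>UNIV. g$p * z (p, k)"
  interpret M: prob_space ?M by (rule gauss_prob)
  have D: "distributed ?M lborel ?X (\<lambda>x. ennreal (normal_density 0 (norm g) x))"
    by (rule lin_distributed[OF False])
  have sp: "0 < norm g" using False by simp
  have int: "integrable ?M (\<lambda>z. (?X z)\<^sup>2)"
    using distributed_integrable[OF D, of "\<lambda>x. x\<^sup>2"] integrable_normal_moment[OF sp, of 0 2]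
    by simp
  have ex: "M.expectation ?X = 0" by (rule M.normal_distributed_expectation[OF sp D])
  have "M.variance ?X = (norm g)\<^sup>2" by (rule M.normal_distributed_variance[OF sp D])
  then have "(\<integral>z. (?X z)\<^sup>2 \<partial>?M) = (norm g)\<^sup>2" using ex by simp
  then show ?thesis using int by (simp add: dot_square_norm)
qed

lemma normal_density_le: "0 < \<sigma> \<Longrightarrow> normal_density 0 \<sigma> x \<le> 1 / \<sigma>"
proof -
  assume sp: "0 < \<sigma>"
  have "exp (-(x - 0)\<^sup>2 / (2 * \<sigma>\<^sup>2)) \<le> 1" by simp
  moreover have "\<sigma> \<le> sqrt (2 * pi * \<sigma>\<^sup>2)"
  proof -
    have "\<sigma>\<^sup>2 \<le> 2 * pi * \<sigma>\<^sup>2" using pi_gt3 by (simp add: mult_le_cancel_right1)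
    then have "sqrt (\<sigma>\<^sup>2) \<le> sqrt (2 * pi * \<sigma>\<^sup>2)" by (rule real_sqrt_le_mono)
    then show ?thesis using sp by simp
  qed
  ultimately have "1 / sqrt (2 * pi * \<sigma>\<^sup>2) * exp (-(x - 0)\<^sup>2 / (2 * \<sigma>\<^sup>2)) \<le> 1 / \<sigma> * 1"
    using sp by (intro mult_mono) (auto simp: frac_le)
  then show ?thesis by (simp add: normal_density_def)
qed

lemma small_ball:
  fixes g :: "real^'n::finite" and k :: "'c::finite"
  assumes g: "g \<noteq> 0" and t: "0 \<le> t"
  shows "measure (std_gauss_mat :: (('n \<times> 'c) \<Rightarrow> real) measure)
     {z \<in> space std_gauss_mat. \<bar>\<Sum>p\<in>UNIV. g$p * z (p, k)\<bar> < t} \<le> 2 * t / norm g"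
proof -
  let ?M = "std_gauss_mat :: (('n \<times> 'c) \<Rightarrow> real) measure"
  let ?X = "\<lambda>z. \<Sum>p\<in>UNIV. g$p * z (p, k)"
  interpret M: prob_space ?M by (rule gauss_prob)
  have D: "distributed ?M lborel ?X (\<lambda>x. ennreal (normal_density 0 (norm g) x))"
    by (rule lin_distributed[OF g])
  have sp: "0 < norm g" using g by simp
  have set: "{z \<in> space ?M. \<bar>?X z\<bar> < t} = ?X -` {-t<..<t} \<inter> space ?M" by auto
  have "emeasure ?M {z \<in> space ?M. \<bar>?X z\<bar> < t} =
      (\<integral>\<^sup>+x. ennreal (normal_density 0 (norm g) x) * indicator {-t<..<t} x \<partial>lborel)"
    unfolding set by (rule distributed_emeasure[OF D]) simp
  also have "\<dots> \<le> (\<integral>\<^sup>+x. ennreal (1 / norm g) * indicator {-t<..<t} x \<partial>lborel)"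
    by (intro nn_integral_mono mult_right_mono) (auto simp: normal_density_le[OF sp])
  also have "\<dots> = ennreal (1 / norm g) * emeasure lborel {-t<..<t}"
    by (rule nn_integral_cmult_indicator) simp
  also have "\<dots> = ennreal (2 * t / norm g)"
    using t by (simp add: ennreal_mult'[symmetric])
  finally have "emeasure ?M {z \<in> space ?M. \<bar>?X z\<bar> < t} \<le> ennreal (2 * t / norm g)" .
  then show ?thesis
    using t sp by (simp add: M.emeasure_eq_measure)
qed

lemma entry_eq: "((F::real^'n^'m) ** to_mat z) $ i $ k = (\<Sum>p\<in>UNIV. F$i$p * z (p, k))"
  by (simp add: matrix_matrix_mult_def to_mat_def)

lemma entry_meas[measurable]:
  "(\<lambda>z. ((F::real^'n::finite^'m::finite) ** to_mat z) $ i $ (k::'c::finite))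
     \<in> borel_measurable (std_gauss_mat :: (('n \<times> 'c) \<Rightarrow> real) measure)"
  unfolding entry_eq by measurable

lemma frob_expect:
  fixes F :: "real^'n::finite^'m::finite"
  shows "integrable (std_gauss_mat :: (('n \<times> 'c::finite) \<Rightarrow> real) measure) (\<lambda>z. frob_sq (F ** to_mat z))
    \<and> (\<integral>z. frob_sq (F ** to_mat z) \<partial>(std_gauss_mat :: (('n \<times> 'c) \<Rightarrow> real) measure)) = real CARD('c) * frob_sq F"
proof -
  let ?M = "std_gauss_mat :: (('n \<times> 'c) \<Rightarrow> real) measure"
  have fe: "frob_sq (F ** to_mat z) = (\<Sum>i\<in>UNIV. \<Sum>k\<in>(UNIV::'c set). (\<Sum>p\<in>UNIV. (F$i)$p * z (p, k))\<^sup>2)" for z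
    unfolding frob_sq_def entry_eq by simp
  have I: "integrable ?M (\<lambda>z. (\<Sum>p\<in>UNIV. (F$i)$p * z (p, k))\<^sup>2)" for i k
    using lin_sq[of "F$i" k] by blast
  have V: "(\<integral>z. (\<Sum>p\<in>UNIV. (F$i)$p * z (p, k))\<^sup>2 \<partial>?M) = F$i \<bullet> F$i" for i k
    using lin_sq[of "F$i" k] by blast
  have "integrable ?M (\<lambda>z. \<Sum>i\<in>UNIV. \<Sum>k\<in>(UNIV::'c set). (\<Sum>p\<in>UNIV. (F$i)$p * z (p, k))\<^sup>2)"
    by (rule Bochner_Integration.integrable_sum, rule Bochner_Integration.integrable_sum, rule I)
  moreover have "(\<integral>z. (\<Sum>i\<in>UNIV. \<Sum>k\<in>(UNIV::'c set). (\<Sum>p\<in>UNIV. (F$i)$p * z (p, k))\<^sup>2) \<partial>?M)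
      = (\<Sum>i\<in>UNIV. \<Sum>k\<in>(UNIV::'c set). F$i \<bullet> F$i)"
    using I V by (simp add: Bochner_Integration.integral_sum Bochner_Integration.integrable_sum)
  moreover have "(\<Sum>i\<in>UNIV. \<Sum>k\<in>(UNIV::'c set). F$i \<bullet> F$i) = real CARD('c) * frob_sq F"
    by (simp add: frob_rows sum_distrib_left)
  ultimately show ?thesis unfolding fe by simp
qed

lemma dir_entries: "dirichlet A H = (\<Sum>k\<in>UNIV. \<Sum>i\<in>UNIV. (\<Sum>j\<in>UNIV. H$j$k * L_hat A$j$i) * H$i$k)"
  unfolding dirichlet_def trace_mat_def by (simp add: matrix_matrix_mult_def transpose_def)

lemma ratio_meas:
  "(\<lambda>z. dirichlet A ((G::real^'n::finite^'n) ** to_mat z) / frob_sq (G ** to_mat z))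
     \<in> borel_measurable (std_gauss_mat :: (('n \<times> 'c::finite) \<Rightarrow> real) measure)"
  unfolding dir_entries frob_sq_def by measurable

lemma frob_meas[measurable]:
  "(\<lambda>z. frob_sq ((G::real^'n::finite^'m::finite) ** to_mat z))
     \<in> borel_measurable (std_gauss_mat :: (('n \<times> 'c::finite) \<Rightarrow> real) measure)"
  unfolding frob_sq_def by measurable

lemma gauss_expect_eq:
  fixes S :: "real^'n^'n"
  assumes "\<exists>G::real^'n^'n. G ** transpose G = S"
  shows "\<exists>G::real^'n^'n. G ** transpose G = S \<and> gauss_expect S f = (\<integral>z. f (G ** to_mat z) \<partial>std_gauss_mat)"
proof -
  define G where "G = (SOME G :: real^'n^'n. G ** transpose G = S)"
  have 1: "G ** transpose G = S" unfolding G_def using someI_ex[OF assms] .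
  have 2: "gauss_expect S f = (\<integral>z. f (G ** to_mat z) \<partial>std_gauss_mat)"
    unfolding gauss_expect_def G_def Let_def by (rule refl)
  show ?thesis using 1 2 by blast
qed

lemma col_inner:
  "v \<bullet> column k ((G::real^'n^'n) ** to_mat z) = (\<Sum>p\<in>UNIV. (transpose G *v v)$p * z (p, k))"
proof -
  have "v \<bullet> column k (G ** to_mat z) = (transpose G *v v) \<bullet> column k (to_mat z)"
    by (simp only: column_mult inner_mat)
  also have "\<dots> = (\<Sum>p\<in>UNIV. (transpose G *v v)$p * z (p, k))"
    by (simp add: inner_vec_def column_def to_mat_def)
  finally show ?thesis .
qed

lemma col_sq_le_frob:
  assumes "norm v = 1"
  shows "(v \<bullet> column k M)\<^sup>2 \<le> frob_sq M"
proof -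
  have "\<bar>v \<bullet> column k M\<bar> \<le> norm (column k M)" using Cauchy_Schwarz_ineq2[of v "column k M"] assms by simp
  then have "(v \<bullet> column k M)\<^sup>2 \<le> (norm (column k M))\<^sup>2" by (metis abs_le_square_iff abs_norm_cancel)
  also have "\<dots> = column k M \<bullet> column k M" by (simp add: dot_square_norm)
  also have "\<dots> \<le> (\<Sum>j\<in>UNIV. column j M \<bullet> column j M)"
    by (rule member_le_sum) auto
  finally show ?thesis by (simp add: frob_cols)
qed

lemma gev_bound:
  fixes A G K :: "real^'n::finite^'n" and v :: "real^'n"
  assumes adj: "is_adjacency A"
    and KL: "\<forall>x. x \<bullet> (L_hat A *v x) = (K *v x) \<bullet> (L_hat A *v (K *v x))"
    and nv: "norm v = 1"
    and mpos: "(transpose G *v v) \<bullet> (transpose G *v v) > 0"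
    and dpos: "\<delta> > 0"
  shows "(\<integral>z. dirichlet A (G ** to_mat z) / frob_sq (G ** to_mat z) \<partial>(std_gauss_mat :: (('n \<times> 'c::finite) \<Rightarrow> real) measure))
     \<le> 4 * sqrt \<delta> + 2 * real CARD('c) * frob_sq (K ** G) / (\<delta> * ((transpose G *v v) \<bullet> (transpose G *v v)))"
proof -
  let ?M = "std_gauss_mat :: (('n \<times> 'c) \<Rightarrow> real) measure"
  interpret M: prob_space ?M by (rule gauss_prob)
  define g where "g = transpose G *v v"
  define m where "m = g \<bullet> g"
  have mp: "m > 0" using mpos unfolding m_def g_def .
  have g0: "g \<noteq> 0" using mp unfolding m_def by auto
  have ng: "norm g = sqrt m" unfolding m_def by (simp add: norm_eq_sqrt_inner)
  define k0 :: 'c where "k0 = undefined"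
  define w where "w = (\<lambda>z::('n \<times> 'c) \<Rightarrow> real. \<Sum>p\<in>UNIV. g$p * z (p, k0))"
  define t where "t = sqrt (\<delta> * m)"
  have t0: "t \<ge> 0" unfolding t_def using dpos mp by simp
  have tt: "t\<^sup>2 = \<delta> * m" unfolding t_def using dpos mp by simp
  define B where "B = {z \<in> space ?M. \<bar>w z\<bar> < t}"
  define R where "R = (\<lambda>z::('n \<times> 'c) \<Rightarrow> real. dirichlet A (G ** to_mat z) / frob_sq (G ** to_mat z))"
  define U where "U = (\<lambda>z::('n \<times> 'c) \<Rightarrow> real. 2 * indicator B z + (2 / (\<delta> * m)) * frob_sq ((K ** G) ** to_mat z))"
  have wcol: "w z = v \<bullet> column k0 (G ** to_mat z)" for z
    unfolding w_def g_def by (simp only: col_inner)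
  have Bs: "B \<in> sets ?M" unfolding B_def w_def by measurable
  have RU: "R z \<le> U z" if zs: "z \<in> space ?M" for z
  proof -
    define H where "H = G ** to_mat z"
    define D where "D = dirichlet A H"
    define F where "F = frob_sq H"
    have D0: "0 \<le> D" and D2: "D \<le> 2 * F" using dir_bounds[OF adj, of H] unfolding D_def F_def by auto
    have DK: "D \<le> 2 * frob_sq ((K ** G) ** to_mat z)"
      using dir_K[OF adj KL, of H] unfolding D_def H_def by (simp add: matrix_mul_assoc)
    have wF: "(w z)\<^sup>2 \<le> F" unfolding wcol F_def H_def by (rule col_sq_le_frob[OF nv])
    have fK: "0 \<le> frob_sq ((K ** G) ** to_mat z)" by (rule frob_nonneg)
    have R_eq: "R z = D / F" unfolding R_def D_def F_def H_def ..
    show ?thesis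
    proof (cases "z \<in> B")
      case True
      have "R z \<le> 2"
      proof (cases "F = 0")
        case True then show ?thesis using R_eq by simp
      next
        case False
        then have "F > 0" using D0 D2 wF by (smt (verit) zero_le_power2)
        then show ?thesis using R_eq D2 by (simp add: divide_le_eq)
      qed
      moreover have "U z \<ge> 2" unfolding U_def using True fK dpos mp by simp
      ultimately show ?thesis by linarith
    next
      case False
      then have "\<bar>w z\<bar> \<ge> t" using zs unfolding B_def by auto
      then have "(w z)\<^sup>2 \<ge> t\<^sup>2" using t0 by (metis abs_le_square_iff abs_of_nonneg)
      then have Fge: "F \<ge> \<delta> * m" using wF tt by linarith
      have dm: "\<delta> * m > 0" using dpos mp by simp
      have "R z = D / F" by (rule R_eq)
      also have "\<dots> \<le> D / (\<delta> * m)" using Fge dm D0 by (intro divide_left_mono) auto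
      also have "\<dots> \<le> (2 * frob_sq ((K ** G) ** to_mat z)) / (\<delta> * m)"
        using DK dm by (intro divide_right_mono) auto
      also have "\<dots> = U z" unfolding U_def using False by simp
      finally show ?thesis .
    qed
  qed
  have Rint: "integrable ?M R"
  proof (rule M.integrable_const_bound[where B = 2])
    show "AE z in std_gauss_mat. norm (R z) \<le> 2"
    proof (rule AE_I2)
      fix z :: "('n \<times> 'c) \<Rightarrow> real"
      have "0 \<le> dirichlet A (G ** to_mat z)" "dirichlet A (G ** to_mat z) \<le> 2 * frob_sq (G ** to_mat z)"
        using dir_bounds[OF adj] by auto
      moreover have "0 \<le> frob_sq (G ** to_mat z)" by (rule frob_nonneg)
      ultimately show "norm (R z) \<le> 2" unfolding R_def
        by (cases "frob_sq (G ** to_mat z) = 0") (auto simp: divide_le_eq abs_le_iff)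
    qed
    show "R \<in> borel_measurable ?M" unfolding R_def by (rule ratio_meas)
  qed
  have Fint: "integrable ?M (\<lambda>z. frob_sq ((K ** G) ** to_mat z))"
    using frob_expect[of "K ** G"] by blast
  have Fval: "(\<integral>z. frob_sq ((K ** G) ** to_mat z) \<partial>?M) = real CARD('c) * frob_sq (K ** G)"
    using frob_expect[of "K ** G"] by blast
  have Iint: "integrable ?M (indicator B :: _ \<Rightarrow> real)"
    using Bs M.emeasure_finite[of B] by (intro integrable_real_indicator) (auto simp: less_top[symmetric])
  have Uint: "integrable ?M U" unfolding U_def using Iint Fint by auto
  have "(\<integral>z. R z \<partial>?M) \<le> (\<integral>z. U z \<partial>?M)"
    by (rule integral_mono[OF Rint Uint RU])
  also have "(\<integral>z. U z \<partial>?M) = 2 * measure ?M B + (2 / (\<delta> * m)) * (real CARD('c) * frob_sq (K ** G))"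
    unfolding U_def using Iint Fint Bs by (simp add: Fval Int_absorb2 sets.sets_into_space)
  also have "measure ?M B \<le> 2 * sqrt \<delta>"
  proof -
    have "measure ?M B \<le> 2 * t / norm g"
      unfolding B_def w_def by (rule small_ball[OF g0 t0])
    also have "\<dots> = 2 * sqrt \<delta>" unfolding t_def ng using mp by (simp add: real_sqrt_mult)
    finally show ?thesis .
  qed
  then have "2 * measure ?M B + (2 / (\<delta> * m)) * (real CARD('c) * frob_sq (K ** G))
      \<le> 4 * sqrt \<delta> + 2 * real CARD('c) * frob_sq (K ** G) / (\<delta> * m)"
    by simp
  finally show ?thesis unfolding R_def m_def g_def .
qed

lemma gram_quad: fixes G :: "real^'m^'n" and v :: "real^'n" shows "v \<bullet> ((G ** transpose G) *v v) = (transpose G *v v) \<bullet> (transpose G *v v)"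
proof -
  have "v \<bullet> ((G ** transpose G) *v v) = v \<bullet> (G *v (transpose G *v v))"
    by (simp only: matrix_vector_mul_assoc)
  also have "\<dots> = (transpose G *v v) \<bullet> (transpose G *v v)" by (rule inner_mat)
  finally show ?thesis .
qed

lemma pow_at_top:
  fixes c \<rho> :: real
  assumes c: "c > 0" and r: "\<rho> > 1"
  shows "filterlim (\<lambda>n. c * \<rho> ^ n) at_top sequentially"
  unfolding filterlim_at_top eventually_sequentially
proof
  fix Z :: real
  obtain N :: nat where N: "Z / (c * (\<rho> - 1)) \<le> real N" using real_nat_ceiling_ge by blast
  show "\<exists>N. \<forall>n\<ge>N. Z \<le> c * \<rho> ^ n"
  proof (intro exI allI impI)
    fix n assume n: "N \<le> n"
    have cr: "c * (\<rho> - 1) > 0" using c r by simp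
    have "Z \<le> c * (\<rho> - 1) * real N" using N cr by (simp add: divide_le_eq mult.commute)
    also have "\<dots> \<le> c * (\<rho> - 1) * real n" using n cr by (intro mult_left_mono) auto
    also have "\<dots> \<le> c * (1 + real n * (\<rho> - 1))" using c by (simp add: algebra_simps)
    also have "\<dots> \<le> c * (1 + (\<rho> - 1)) ^ n"
      using Bernoulli_inequality[of "\<rho> - 1" n] r c by (intro mult_left_mono) auto
    finally show "Z \<le> c * \<rho> ^ n" by simp
  qed
qed

theorem theorem3:
  fixes A :: "real^'n^'n" and X :: "real^'d^'n" and u :: "real^'n"
    and a b s :: real
  assumes adj: "is_adjacency A"
    and Xnz: "X \<noteq> 0"
    and s_pos: "s > 0"
    and a_nz: "a \<noteq> 0"
    and growth: "a\<^sup>2 * s + b\<^sup>2 > 1"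
    and u_nz: "u \<noteq> 0"
    and u_eig: "A_hat A *v u = u"
    and Xu: "transpose X *v u \<noteq> 0"
  shows "filterlim (\<lambda>L. FSP A X s a b TYPE('c::finite) L) at_top sequentially
       \<and> (\<lambda>L. GEV A X s a b TYPE('c::finite) L) \<longlonglongrightarrow> 0"
proof -
  obtain K :: "real^'n^'n" where Kperp: "\<forall>x. K *v x \<in> perpsp A"
    and comm: "\<forall>x. A_hat A *v (K *v x) = K *v (A_hat A *v x)"
    and KL: "\<forall>x. x \<bullet> (L_hat A *v x) = (K *v x) \<bullet> (L_hat A *v (K *v x))"
    using proj_exists[OF adj] by blast
  obtain \<theta> where t0: "0 \<le> \<theta>" and t1: "\<theta> < 1" and th: "\<forall>x\<in>perpsp A. norm (A_hat A *v x) \<le> \<theta> * norm x"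
    using theta_exists[OF adj] by blast
  define \<rho> where "\<rho> = a\<^sup>2 * s + b\<^sup>2"
  define \<gamma> where "\<gamma> = a\<^sup>2 * s * \<theta>\<^sup>2 + b\<^sup>2"
  have r1: "\<rho> > 1" using growth unfolding \<rho>_def .
  have as: "a\<^sup>2 * s > 0" using a_nz s_pos by simp
  have g0: "0 \<le> \<gamma>" unfolding \<gamma>_def using as by simp
  have gr: "\<gamma> < \<rho>"
  proof -
    have "\<theta>\<^sup>2 < 1" using t0 t1 by (simp add: power_less_one_iff abs_less_iff)
    then have "a\<^sup>2 * s * \<theta>\<^sup>2 < a\<^sup>2 * s * 1" using as by (intro mult_strict_left_mono) auto
    then show ?thesis unfolding \<gamma>_def \<rho>_def by simp
  qed
  define v where "v = (1 / norm u) *\<^sub>R u"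
  have nv: "norm v = 1" unfolding v_def using u_nz by simp
  have vE: "A_hat A *v v = v" unfolding v_def by (simp add: matrix_vector_mult_scaleR u_eig)
  define c0 where "c0 = s\<^sup>2 / real CARD('d)"
  have c0: "c0 > 0" unfolding c0_def using s_pos by simp
  define m0 where "m0 = v \<bullet> (sigma_cov A X s a b 0 *v v)"
  have m0: "m0 > 0"
  proof -
    have "transpose X *v v = (1 / norm u) *\<^sub>R (transpose X *v u)"
      unfolding v_def by (simp only: matrix_vector_mult_scaleR)
    then have "transpose X *v v \<noteq> 0" using Xu u_nz by simp
    then have wpos: "(transpose X *v v) \<bullet> (transpose X *v v) > 0" by simp
    show ?thesis unfolding m0_def m_base[OF adj vE] using mult_pos_pos[OF c0 wpos] unfolding c0_def .
  qed
  have ml: "v \<bullet> (sigma_cov A X s a b l *v v) = \<rho> ^ l * m0" for l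
    unfolding m0_def \<rho>_def by (rule m_closed[OF adj vE])
  define q0 where "q0 = qK K (sigma_cov A X s a b 0)"
  have q0: "q0 \<ge> 0" unfolding q0_def by (rule qK_nonneg[OF adj]) (use s_pos in simp)
  have ql: "qK K (sigma_cov A X s a b l) \<le> \<gamma> ^ l * q0" for l
    unfolding q0_def \<gamma>_def by (rule q_seq[OF adj Kperp comm th t0]) (use s_pos in simp)
  define C where "C = real CARD('c)"
  have C: "C > 0" unfolding C_def by simp
  define fx where "fx = frob_sq X"
  have fx: "fx > 0"
  proof -
    obtain i j where ij: "X$i$j \<noteq> 0" using Xnz by (metis vec_eq_iff zero_index)
    have "(X$i$j)\<^sup>2 \<le> (\<Sum>j\<in>UNIV. (X$i$j)\<^sup>2)" by (rule member_le_sum) auto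
    also have "\<dots> \<le> (\<Sum>i\<in>UNIV. \<Sum>j\<in>UNIV. (X$i$j)\<^sup>2)" by (rule member_le_sum) (auto intro: sum_nonneg)
    finally show ?thesis using ij unfolding fx_def frob_sq_def by (smt (verit) zero_less_power2)
  qed
  have fsp: "C * m0 / fx * \<rho> ^ l \<le> FSP A X s a b TYPE('c) (Suc l)" for l
  proof -
    obtain G :: "real^'n^'n" where G: "G ** transpose G = sigma_cov A X s a b l"
      and E: "gauss_expect (sigma_cov A X s a b l) (\<lambda>H::real^'c^'n. frob_sq H / frob_sq X)
              = (\<integral>z. frob_sq (G ** to_mat z) / frob_sq X \<partial>(std_gauss_mat :: (('n \<times> 'c) \<Rightarrow> real) measure))"
      using gauss_expect_eq[OF factor_exists[OF adj less_imp_le[OF s_pos]],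
          of X a b l "\<lambda>H::real^'c^'n. frob_sq H / frob_sq X"] by blast
    have "FSP A X s a b TYPE('c) (Suc l) = (\<integral>z. frob_sq (G ** to_mat z) \<partial>(std_gauss_mat :: (('n \<times> 'c) \<Rightarrow> real) measure)) / fx"
      unfolding FSP_def Sigma_L_def fx_def using E by simp
    also have "\<dots> = C * frob_sq G / fx" using frob_expect[of G, where 'c='c] unfolding C_def by simp
    finally have F: "FSP A X s a b TYPE('c) (Suc l) = C * frob_sq G / fx" .
    have "\<rho> ^ l * m0 \<le> frob_sq G" using frob_ge_quad[OF nv, of G] G ml[of l] by simp
    then have "C * (\<rho> ^ l * m0) / fx \<le> C * frob_sq G / fx"
      using C fx by (intro divide_right_mono mult_left_mono) auto
    then show ?thesis unfolding F by (simp add: algebra_simps)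
  qed
  have lim1: "filterlim (\<lambda>L. FSP A X s a b TYPE('c) L) at_top sequentially"
  proof -
    have "filterlim (\<lambda>l. C * m0 / fx * \<rho> ^ l) at_top sequentially"
      using C m0 fx r1 by (intro pow_at_top) auto
    then have "filterlim (\<lambda>l. FSP A X s a b TYPE('c) (Suc l)) at_top sequentially"
      by (rule filterlim_at_top_mono) (use fsp in auto)
    then show ?thesis by (simp add: filterlim_sequentially_Suc)
  qed
  have gev: "0 \<le> GEV A X s a b TYPE('c) (Suc l) \<and>
      GEV A X s a b TYPE('c) (Suc l) \<le> 4 * sqrt \<delta> + 2 * C * q0 / (\<delta> * m0) * (\<gamma> / \<rho>) ^ l"
    if dpos: "\<delta> > 0" for l \<delta>
  proof -
    obtain G :: "real^'n^'n" where G: "G ** transpose G = sigma_cov A X s a b l"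
      and E: "gauss_expect (sigma_cov A X s a b l) (\<lambda>H::real^'c^'n. dirichlet A H / frob_sq H)
              = (\<integral>z. dirichlet A (G ** to_mat z) / frob_sq (G ** to_mat z) \<partial>(std_gauss_mat :: (('n \<times> 'c) \<Rightarrow> real) measure))"
      using gauss_expect_eq[OF factor_exists[OF adj less_imp_le[OF s_pos]],
          of X a b l "\<lambda>H::real^'c^'n. dirichlet A H / frob_sq H"] by blast
    have GE: "GEV A X s a b TYPE('c) (Suc l) =
       (\<integral>z. dirichlet A (G ** to_mat z) / frob_sq (G ** to_mat z) \<partial>(std_gauss_mat :: (('n \<times> 'c) \<Rightarrow> real) measure))"
      unfolding GEV_def Sigma_L_def using E by simp
    have mG: "(transpose G *v v) \<bullet> (transpose G *v v) = \<rho> ^ l * m0"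
      using gram_quad[of v G] G ml[of l] by simp
    have mpos: "(transpose G *v v) \<bullet> (transpose G *v v) > 0" using mG m0 r1 by simp
    have "GEV A X s a b TYPE('c) (Suc l) \<le> 4 * sqrt \<delta> + 2 * C * frob_sq (K ** G) / (\<delta> * (\<rho> ^ l * m0))"
      unfolding GE C_def using gev_bound[OF adj KL nv mpos dpos, where 'c='c] mG by simp
    also have "2 * C * frob_sq (K ** G) / (\<delta> * (\<rho> ^ l * m0)) \<le> 2 * C * (\<gamma> ^ l * q0) / (\<delta> * (\<rho> ^ l * m0))"
    proof -
      have "frob_sq (K ** G) \<le> \<gamma> ^ l * q0" using ql[of l] qK_gram[of K G] G by simp
      then show ?thesis using C dpos m0 r1 by (intro divide_right_mono mult_left_mono) auto
    qed
    also have "2 * C * (\<gamma> ^ l * q0) / (\<delta> * (\<rho> ^ l * m0)) = 2 * C * q0 / (\<delta> * m0) * (\<gamma> / \<rho>) ^ l"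
      using r1 by (simp add: power_divide field_simps)
    finally have up: "GEV A X s a b TYPE('c) (Suc l) \<le> 4 * sqrt \<delta> + 2 * C * q0 / (\<delta> * m0) * (\<gamma> / \<rho>) ^ l"
      by simp
    have "0 \<le> (\<integral>z. dirichlet A (G ** to_mat z) / frob_sq (G ** to_mat z) \<partial>(std_gauss_mat :: (('n \<times> 'c) \<Rightarrow> real) measure))"
    proof (rule Bochner_Integration.integral_nonneg)
      fix z :: "('n \<times> 'c) \<Rightarrow> real"
      assume "z \<in> space std_gauss_mat"
      show "0 \<le> dirichlet A (G ** to_mat z) / frob_sq (G ** to_mat z)"
        using dir_bounds[OF adj, of "G ** to_mat z"] frob_nonneg[of "G ** to_mat z"] by simp
    qed
    then show ?thesis using up GE by simp
  qed
  have lim2: "(\<lambda>L. GEV A X s a b TYPE('c) L) \<longlonglongrightarrow> 0"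
  proof -
    have "(\<lambda>l. GEV A X s a b TYPE('c) (Suc l)) \<longlonglongrightarrow> 0"
    proof (rule LIMSEQ_I)
      fix r :: real assume r: "0 < r"
      define \<delta> where "\<delta> = (r / 8)\<^sup>2"
      have dpos: "\<delta> > 0" unfolding \<delta>_def using r by simp
      have sd: "4 * sqrt \<delta> = r / 2" unfolding \<delta>_def using r by simp
      define C' where "C' = 2 * C * q0 / (\<delta> * m0)"
      have "(\<lambda>l. (\<gamma> / \<rho>) ^ l) \<longlonglongrightarrow> 0" using g0 gr r1 by (intro LIMSEQ_power_zero) simp
      then have "(\<lambda>l. C' * (\<gamma> / \<rho>) ^ l) \<longlonglongrightarrow> 0" by (rule tendsto_mult_right_zero)
      then obtain N where N: "\<forall>n\<ge>N. norm (C' * (\<gamma> / \<rho>) ^ n - 0) < r / 2"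
        using LIMSEQ_D[of _ 0 "r / 2"] r by fastforce
      show "\<exists>no. \<forall>n\<ge>no. norm (GEV A X s a b TYPE('c) (Suc n) - 0) < r"
      proof (intro exI allI impI)
        fix n assume n: "N \<le> n"
        have "C' * (\<gamma> / \<rho>) ^ n < r / 2" using N n by auto
        moreover have "0 \<le> GEV A X s a b TYPE('c) (Suc n)"
          and "GEV A X s a b TYPE('c) (Suc n) \<le> 4 * sqrt \<delta> + C' * (\<gamma> / \<rho>) ^ n"
          using gev[OF dpos, of n] unfolding C'_def by auto
        ultimately show "norm (GEV A X s a b TYPE('c) (Suc n) - 0) < r" using sd by simp
      qed
    qed
    then show ?thesis by (simp add: filterlim_sequentially_Suc)
  qed
  show ?thesis using lim1 lim2 by blast
qed

end
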